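(* Let $I$ be a resident-minimal instance in which every hospital has quota $1$ (the stable marriage case). Then each $(r,h)\in\mathrm{tent}(I)$ is finalizable in $I$ only if it belongs to the maximal safe set with respect to $I$ (the unique inclusion-maximal subset of $\mathrm{tent}(I)$ that is safe with respect to $I$).
   Context: An instance $I$ consists of finite disjoint sets $R$ (residents) and $H$ (hospitals), a positive integer quota $q_h$ for each $h\in H$, for each $r\in R$ a preference list of $r$ (a sequence of distinct members of $H$, not necessarily all), and for each $h\in H$ a preference list of $h$ (a sequence of distinct members of $R$). A list is complete if it contains every member of the opposite side; an instance is complete if all lists are complete. A match is a pair $(r,h)\in R\times H$. For a set $M$ of matches, $\mathrm{res}_h M=\{r:(r,h)\in M\}$, $\mathrm{res}\,M=\{r:(r,h)\in M\text{ for some }h\}$. $J$ is an extension of $I$ (same $R,H$, quotas) if every list of $J$ has the corresponding list of $I$ as a prefix; a complete extension is a completion. An event is $(r,h)^+$ (proposal) or $(r,h)^-$ (rejection). For an event sequence $\sigma$, $\mathrm{prop}(\sigma)$, $\mathrm{rej}(\sigma)$ are the sets of matches proposed/rejected in $\sigma$, $\mathrm{tent}(\sigma)=\mathrm{prop}(\sigma)\setminus\mathrm{rej}(\sigma)$, and $\mathrm{pend}_I(\sigma)$ is the set of $(r,h)\in\mathrm{tent}(\sigma)$ with $r$ not on the list of $h$ in $I$. A match $(r,h)\in M$ is ousted from $M$ in $I$ if the list of $h$ in $I$ contains at least $q_h$ residents of $\mathrm{res}_h M$ and either $r$ is not on it or $r$ is preceded on it by at least $q_h$ residents of $\mathrm{res}_h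 M$. $I$-feasible sequences: the empty sequence is $I$-feasible; if $\sigma$ is $I$-feasible then $\sigma+(r,h)^+$ is $I$-feasible if $r\notin\mathrm{res}\,\mathrm{tent}(\sigma)$, $(r,h)\notin\mathrm{prop}(\sigma)$, $h$ is on the list of $r$ in $I$ and $(r,h')\in\mathrm{rej}(\sigma)$ for every $h'$ preceding $h$ on it; and $\sigma+(r,h)^-$ is $I$-feasible if $(r,h)$ is ousted from $\mathrm{prop}(\sigma)$ in $I$ and $(r,h)\notin\mathrm{rej}(\sigma)$. All maximal $I$-feasible sequences contain the same events; $\mathrm{prop}(I),\mathrm{tent}(I),\mathrm{pend}(I)$ denote $\mathrm{prop}(\sigma),\mathrm{tent}(\sigma),\mathrm{pend}_I(\sigma)$ for any maximal $I$-feasible $\sigma$. A match $(r,h)\in\mathrm{tent}(I)$ is finalizable in $I$ if $(r,h)\in\mathrm{tent}(J)$ for every completion $J$ of $I$. $I$ is resident-minimal if $\mathrm{prop}(I)$ equals the set of matches $(r,h)$ with $h$ on the list of $r$ in $I$. Let $M\subseteq\mathrm{tent}(I)$. A resident $r'$ is relevant to $h$ with respect to $M$ if $(r',h)\in M$ or $r'\notin\mathrm{res}\,M$. A match $(r,h)\in M$ is endangered in $M$ with respect to $I$ if: when $(r,h)\in\mathrm{tent}(I)\setminus\mathrm{pend}(I)$, the list of $h$ in $I$ contains at least $q_h$ residents preceding $r$ that are relevant to $h$ with respect to $M$; when $(r,h)\in\mathrm{pend}(I)$, the number of residents relevant to $h$ with respect to $M$ is at least $q_h+1$. $M$ is safe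 with respect to $I$ if no match of $M$ is endangered in $M$ with respect to $I$. (There is a unique inclusion-maximal safe subset of $\mathrm{tent}(I)$.) *)

theory Defs
  imports Main
begin

text \<open>Residents have type 'r, hospitals type 'h
  (so the two sets are automatically disjoint). Lists of non-residents / non-hospitals are
  required to be empty; they carry no meaning.\<close>

record ('r, 'h) hr_instance =
  Res   :: "'r set"
  Hosp  :: "'h set"
  quota :: "'h \<Rightarrow> nat"
  rlist :: "'r \<Rightarrow> 'h list"
  hlist :: "'h \<Rightarrow> 'r list"

definition wf_instance :: "('r, 'h) hr_instance \<Rightarrow> bool" where
  "wf_instance I \<longleftrightarrow> finite (Res I) \<and> finite (Hosp I)
     \<and> (\<forall>h\<in>Hosp I. quota I h > 0)
     \<and> (\<forall>r\<in>Res I. distinct (rlist I r) \<and> set (rlist I r) \<subseteq> Hosp I)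
     \<and> (\<forall>h\<in>Hosp I. distinct (hlist I h) \<and> set (hlist I h) \<subseteq> Res I)
     \<and> (\<forall>r. r \<notin> Res I \<longrightarrow> rlist I r = [])
     \<and> (\<forall>h. h \<notin> Hosp I \<longrightarrow> hlist I h = [])"

definition complete_instance :: "('r, 'h) hr_instance \<Rightarrow> bool" where
  "complete_instance I \<longleftrightarrow> (\<forall>r\<in>Res I. set (rlist I r) = Hosp I)
     \<and> (\<forall>h\<in>Hosp I. set (hlist I h) = Res I)"

definition extension :: "('r, 'h) hr_instance \<Rightarrow> ('r, 'h) hr_instance \<Rightarrow> bool" where
  "extension I J \<longleftrightarrow> wf_instance J \<and> Res J = Res I \<and> Hosp J = Hosp I
     \<and> (\<forall>h\<in>Hosp I. quota J h = quota I h)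
     \<and> (\<forall>r\<in>Res I. (\<exists>ys. rlist J r = rlist I r @ ys))
     \<and> (\<forall>h\<in>Hosp I. (\<exists>ys. hlist J h = hlist I h @ ys))"

definition completion :: "('r, 'h) hr_instance \<Rightarrow> ('r, 'h) hr_instance \<Rightarrow> bool" where
  "completion I J \<longleftrightarrow> extension I J \<and> complete_instance J"

definition precedes :: "'a list \<Rightarrow> 'a \<Rightarrow> 'a \<Rightarrow> bool" where
  "precedes xs a b \<longleftrightarrow> (\<exists>i j. i < j \<and> j < length xs \<and> xs ! i = a \<and> xs ! j = b)"

datatype ('r, 'h) event = Prop 'r 'h | Rej 'r 'h

definition props :: "('r, 'h) event list \<Rightarrow> ('r \<times> 'h) set" where
  "props \<sigma> = {(r, h). Prop r h \<in> set \<sigma>}"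

definition rejs :: "('r, 'h) event list \<Rightarrow> ('r \<times> 'h) set" where
  "rejs \<sigma> = {(r, h). Rej r h \<in> set \<sigma>}"

definition tents :: "('r, 'h) event list \<Rightarrow> ('r \<times> 'h) set" where
  "tents \<sigma> = props \<sigma> - rejs \<sigma>"

definition pends :: "('r, 'h) hr_instance \<Rightarrow> ('r, 'h) event list \<Rightarrow> ('r \<times> 'h) set" where
  "pends I \<sigma> = {(r, h) \<in> tents \<sigma>. r \<notin> set (hlist I h)}"

definition res_h :: "'h \<Rightarrow> ('r \<times> 'h) set \<Rightarrow> 'r set" where
  "res_h h M = {r. (r, h) \<in> M}"

definition res_of :: "('r \<times> 'h) set \<Rightarrow> 'r set" where
  "res_of M = {r. \<exists>h. (r, h) \<in> M}"

definition ousted :: "('r, 'h) hr_instance \<Rightarrow> ('r \<times> 'h) set \<Rightarrow> 'r \<Rightarrow> 'h \<Rightarrow> bool" where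
  "ousted I M r h \<longleftrightarrow> (r, h) \<in> M
     \<and> card (set (hlist I h) \<inter> res_h h M) \<ge> quota I h
     \<and> (r \<notin> set (hlist I h)
        \<or> card {r'\<in>res_h h M. precedes (hlist I h) r' r} \<ge> quota I h)"

inductive feasible :: "('r, 'h) hr_instance \<Rightarrow> ('r, 'h) event list \<Rightarrow> bool" for I where
  feas_Nil: "feasible I []"
| feas_Prop: "feasible I \<sigma> \<Longrightarrow> r \<notin> res_of (tents \<sigma>) \<Longrightarrow> (r, h) \<notin> props \<sigma>
     \<Longrightarrow> h \<in> set (rlist I r)
     \<Longrightarrow> (\<forall>h'. precedes (rlist I r) h' h \<longrightarrow> (r, h') \<in> rejs \<sigma>)
     \<Longrightarrow> feasible I (\<sigma> @ [Prop r h])"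
| feas_Rej: "feasible I \<sigma> \<Longrightarrow> ousted I (props \<sigma>) r h \<Longrightarrow> (r, h) \<notin> rejs \<sigma>
     \<Longrightarrow> feasible I (\<sigma> @ [Rej r h])"

definition maximal_feasible :: "('r, 'h) hr_instance \<Rightarrow> ('r, 'h) event list \<Rightarrow> bool" where
  "maximal_feasible I \<sigma> \<longleftrightarrow> feasible I \<sigma> \<and> (\<forall>e. \<not> feasible I (\<sigma> @ [e]))"

text \<open>All maximal feasible sequences contain the same events (paper), so any choice works.\<close>
definition max_seq :: "('r, 'h) hr_instance \<Rightarrow> ('r, 'h) event list" where
  "max_seq I = (SOME \<sigma>. maximal_feasible I \<sigma>)"

definition propI :: "('r, 'h) hr_instance \<Rightarrow> ('r \<times> 'h) set" where
  "propI I = props (max_seq I)"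

definition tentI :: "('r, 'h) hr_instance \<Rightarrow> ('r \<times> 'h) set" where
  "tentI I = tents (max_seq I)"

definition pendI :: "('r, 'h) hr_instance \<Rightarrow> ('r \<times> 'h) set" where
  "pendI I = pends I (max_seq I)"

definition finalizable :: "('r, 'h) hr_instance \<Rightarrow> 'r \<Rightarrow> 'h \<Rightarrow> bool" where
  "finalizable I r h \<longleftrightarrow> (r, h) \<in> tentI I \<and> (\<forall>J. completion I J \<longrightarrow> (r, h) \<in> tentI J)"

definition resident_minimal :: "('r, 'h) hr_instance \<Rightarrow> bool" where
  "resident_minimal I \<longleftrightarrow> propI I = {(r, h). h \<in> set (rlist I r)}"

definition relevant :: "('r \<times> 'h) set \<Rightarrow> 'h \<Rightarrow> 'r \<Rightarrow> bool" where
  "relevant M h r' \<longleftrightarrow> (r', h) \<in> M \<or> r' \<notin> res_of M"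

definition endangered :: "('r, 'h) hr_instance \<Rightarrow> ('r \<times> 'h) set \<Rightarrow> 'r \<Rightarrow> 'h \<Rightarrow> bool" where
  "endangered I M r h \<longleftrightarrow> (r, h) \<in> M \<and>
     (if (r, h) \<in> pendI I
      then card {r'\<in>Res I. relevant M h r'} \<ge> quota I h + 1
      else card {r'\<in>Res I. precedes (hlist I h) r' r \<and> relevant M h r'} \<ge> quota I h)"

definition safe :: "('r, 'h) hr_instance \<Rightarrow> ('r \<times> 'h) set \<Rightarrow> bool" where
  "safe I M \<longleftrightarrow> M \<subseteq> tentI I \<and> (\<forall>(r, h)\<in>M. \<not> endangered I M r h)"

text \<open>The unique inclusion-maximal safe subset of tent(I) (uniqueness is a fact from the paper).\<close>
definition max_safe :: "('r, 'h) hr_instance \<Rightarrow> ('r \<times> 'h) set" where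
  "max_safe I = (THE M. safe I M \<and> (\<forall>M'. safe I M' \<and> M \<subseteq> M' \<longrightarrow> M' = M))"

end

theory Submission
  imports Defs
begin



lemma precedes_Nil[simp]: "\<not> precedes [] a b" by (simp add: precedes_def)

lemma precedes_Cons: "precedes (x # xs) a b \<longleftrightarrow> (x = a \<and> b \<in> set xs) \<or> precedes xs a b"
proof
  assume "precedes (x # xs) a b"
  then obtain i j where ij: "i < j" "j < length (x#xs)" "(x#xs)!i = a" "(x#xs)!j = b"
    unfolding precedes_def by blast
  then obtain j' where j: "j = Suc j'" by (cases j) auto
  show "(x = a \<and> b \<in> set xs) \<or> precedes xs a b"
  proof (cases i)
    case 0
    then have "x = a" using ij by simp
    moreover have "b \<in> set xs" using ij j by (auto simp: in_set_conv_nth)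
    ultimately show ?thesis by blast
  next
    case (Suc i')
    then have "precedes xs a b" unfolding precedes_def using ij j
      by (intro exI[of _ i'] exI[of _ j']) auto
    then show ?thesis by blast
  qed
next
  assume "(x = a \<and> b \<in> set xs) \<or> precedes xs a b"
  then show "precedes (x # xs) a b"
  proof
    assume "x = a \<and> b \<in> set xs"
    then obtain k where "k < length xs" "xs ! k = b" "x = a" by (auto simp: in_set_conv_nth)
    then show ?thesis unfolding precedes_def by (intro exI[of _ 0] exI[of _ "Suc k"]) auto
  next
    assume "precedes xs a b"
    then obtain i j where "i < j" "j < length xs" "xs!i = a" "xs!j = b"
      unfolding precedes_def by blast
    then show ?thesis unfolding precedes_def by (intro exI[of _ "Suc i"] exI[of _ "Suc j"]) auto
  qed
qed

lemma precedes_set: "precedes xs a b \<Longrightarrow> a \<in> set xs \<and> b \<in> set xs"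
  by (induction xs) (auto simp: precedes_Cons)

lemma precedes_append:
  "precedes (xs @ ys) a b \<longleftrightarrow> precedes xs a b \<or> (a \<in> set xs \<and> b \<in> set ys) \<or> precedes ys a b"
  by (induction xs) (auto simp: precedes_Cons)

lemma precedes_filter: "P a \<Longrightarrow> P b \<Longrightarrow> precedes (filter P xs) a b \<longleftrightarrow> precedes xs a b"
  by (induction xs) (auto simp: precedes_Cons)

lemma precedes_irrefl: "distinct xs \<Longrightarrow> \<not> precedes xs a a"
  by (induction xs) (auto simp: precedes_Cons)

lemma precedes_total: "a \<in> set xs \<Longrightarrow> b \<in> set xs \<Longrightarrow> a \<noteq> b
  \<Longrightarrow> precedes xs a b \<or> precedes xs b a"
  by (induction xs) (auto simp: precedes_Cons)

lemma precedes_prefix: "b \<in> set xs \<Longrightarrow> distinct (xs @ ys) \<Longrightarrow>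
   precedes (xs @ ys) a b \<longleftrightarrow> precedes xs a b"
  by (auto simp: precedes_append dest: precedes_set)

lemma precedes_asym: "distinct xs \<Longrightarrow> precedes xs a b \<Longrightarrow> \<not> precedes xs b a"
  by (induction xs) (auto simp: precedes_Cons dest: precedes_set)



lemma props_append[simp]: "props (a @ b) = props a \<union> props b"
  by (auto simp: props_def)
lemma rejs_append[simp]: "rejs (a @ b) = rejs a \<union> rejs b"
  by (auto simp: rejs_def)
lemma props_simps[simp]: "props [] = {}" "props [Prop r h] = {(r,h)}" "props [Rej r h] = {}"
  by (auto simp: props_def)
lemma rejs_simps[simp]: "rejs [] = {}" "rejs [Prop r h] = {}" "rejs [Rej r h] = {(r,h)}"
  by (auto simp: rejs_def)
lemma in_props: "(r,h) \<in> props \<sigma> \<longleftrightarrow> Prop r h \<in> set \<sigma>"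
  by (simp add: props_def)
lemma in_rejs: "(r,h) \<in> rejs \<sigma> \<longleftrightarrow> Rej r h \<in> set \<sigma>"
  by (simp add: rejs_def)

lemma feasible_snocE:
  assumes "feasible I (\<sigma> @ [e])"
  shows "feasible I \<sigma> \<and>
    (\<forall>r h. e = Prop r h \<longrightarrow> r \<notin> res_of (tents \<sigma>) \<and> (r,h) \<notin> props \<sigma> \<and> h \<in> set (rlist I r)
        \<and> (\<forall>h'. precedes (rlist I r) h' h \<longrightarrow> (r,h') \<in> rejs \<sigma>)) \<and>
    (\<forall>r h. e = Rej r h \<longrightarrow> ousted I (props \<sigma>) r h \<and> (r,h) \<notin> rejs \<sigma>)"
  using assms by (cases rule: feasible.cases) auto

lemma feasible_prefix: "feasible I (\<sigma> @ \<tau>) \<Longrightarrow> feasible I \<sigma>"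
proof (induction \<tau> rule: rev_induct)
  case Nil then show ?case by simp
next
  case (snoc x xs)
  then have "feasible I ((\<sigma> @ xs) @ [x])" by simp
  then have "feasible I (\<sigma> @ xs)" using feasible_snocE by blast
  then show ?case using snoc.IH by blast
qed

lemma ousted_in: "ousted I M r h \<Longrightarrow> (r,h) \<in> M"
  by (simp add: ousted_def)

lemma feasible_inv: "feasible I \<sigma> \<Longrightarrow> rejs \<sigma> \<subseteq> props \<sigma> \<and> props \<sigma> \<subseteq> {(r,h). h \<in> set (rlist I r)}"
  by (induction rule: feasible.induct) (auto dest: ousted_in)

lemma wf_rlist: "wf_instance I \<Longrightarrow> h \<in> set (rlist I r) \<Longrightarrow> r \<in> Res I \<and> h \<in> Hosp I"
proof -
  assume w: "wf_instance I" and h: "h \<in> set (rlist I r)"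
  have a: "\<forall>r. r \<notin> Res I \<longrightarrow> rlist I r = []" and b: "\<forall>r\<in>Res I. distinct (rlist I r) \<and> set (rlist I r) \<subseteq> Hosp I"
    using w unfolding wf_instance_def by simp_all
  have "r \<in> Res I" using a h by force
  then show ?thesis using b h by auto
qed

lemma wf_hlist: "wf_instance I \<Longrightarrow> r \<in> set (hlist I h) \<Longrightarrow> r \<in> Res I \<and> h \<in> Hosp I"
proof -
  assume w: "wf_instance I" and h: "r \<in> set (hlist I h)"
  have a: "\<forall>h. h \<notin> Hosp I \<longrightarrow> hlist I h = []" and b: "\<forall>h\<in>Hosp I. distinct (hlist I h) \<and> set (hlist I h) \<subseteq> Res I"
    using w unfolding wf_instance_def by simp_all
  have "h \<in> Hosp I" using a h by force
  then show ?thesis using b h by auto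
qed

lemma feasible_props_RH: "wf_instance I \<Longrightarrow> feasible I \<sigma> \<Longrightarrow> (r,h) \<in> props \<sigma> \<Longrightarrow> r \<in> Res I \<and> h \<in> Hosp I"
proof -
  assume w: "wf_instance I" and f: "feasible I \<sigma>" and p: "(r,h) \<in> props \<sigma>"
  have "h \<in> set (rlist I r)" using feasible_inv[OF f] p by auto
  then show ?thesis using wf_rlist[OF w] by simp
qed





lemma tents_fun: "feasible I \<sigma> \<Longrightarrow> (r,h1) \<in> tents \<sigma> \<Longrightarrow> (r,h2) \<in> tents \<sigma> \<Longrightarrow> h1 = h2"
proof (induction arbitrary: r h1 h2 rule: feasible.induct)
  case feas_Nil then show ?case by (simp add: tents_def)
next
  case (feas_Prop \<sigma> r0 h0)
  then show ?case by (auto simp: tents_def res_of_def)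
next
  case (feas_Rej \<sigma> r0 h0)
  then show ?case by (auto simp: tents_def)
qed

lemma prop_order: "feasible I \<sigma> \<Longrightarrow> Prop r h \<in> set \<sigma> \<Longrightarrow>
   h \<in> set (rlist I r) \<and> (\<forall>h'. precedes (rlist I r) h' h \<longrightarrow> (r,h') \<in> rejs \<sigma>)"
  by (induction rule: feasible.induct) auto

lemma ousted_mono: "ousted I M x k \<Longrightarrow> M \<subseteq> M' \<Longrightarrow> ousted I M' x k"
proof -
  assume o: "ousted I M x k" and s: "M \<subseteq> M'"
  have r: "res_h k M \<subseteq> res_h k M'" using s by (auto simp: res_h_def)
  have c1: "card (set (hlist I k) \<inter> res_h k M) \<le> card (set (hlist I k) \<inter> res_h k M')"
    by (rule card_mono) (use r in auto)
  have c2: "card {r'\<in>res_h k M. precedes (hlist I k) r' x} \<le> card {r'\<in>res_h k M'. precedes (hlist I k) r' x}"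
    by (rule card_mono) (use r in \<open>auto intro: finite_subset[of _ "set (hlist I k)"] dest: precedes_set\<close>)
  show ?thesis using o s c1 c2 unfolding ousted_def by auto
qed

lemma rej_ousted: "feasible I \<sigma> \<Longrightarrow> Rej x k \<in> set \<sigma> \<Longrightarrow> ousted I (props \<sigma>) x k"
  by (induction rule: feasible.induct) (auto elim: ousted_mono)

lemma feasible_transfer:
  assumes "feasible A \<sigma>"
    and "\<And>r h. Prop r h \<in> set \<sigma> \<Longrightarrow> h \<in> set (rlist A r) \<Longrightarrow>
          h \<in> set (rlist B r) \<and> (\<forall>h'. precedes (rlist B r) h' h \<longrightarrow> precedes (rlist A r) h' h)"
    and "\<And>M r h. M \<subseteq> props \<sigma> \<Longrightarrow> ousted A M r h \<Longrightarrow> ousted B M r h"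
  shows "feasible B \<sigma>"
  using assms
proof (induction rule: feasible.induct)
  case feas_Nil then show ?case by (simp add: feasible.feas_Nil)
next
  case (feas_Prop \<sigma> r h)
  have "feasible B \<sigma>"
  proof (rule feas_Prop.IH)
    show "\<And>r h. Prop r h \<in> set \<sigma> \<Longrightarrow> h \<in> set (rlist A r) \<Longrightarrow>
          h \<in> set (rlist B r) \<and> (\<forall>h'. precedes (rlist B r) h' h \<longrightarrow> precedes (rlist A r) h' h)"
      using feas_Prop.prems(1) by simp
    show "\<And>M r h. M \<subseteq> props \<sigma> \<Longrightarrow> ousted A M r h \<Longrightarrow> ousted B M r h"
      using feas_Prop.prems(2) by (metis props_append sup.coboundedI1)
  qed
  moreover have "h \<in> set (rlist B r) \<and> (\<forall>h'. precedes (rlist B r) h' h \<longrightarrow> precedes (rlist A r) h' h)"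
    using feas_Prop.prems(1)[of r h] feas_Prop.hyps by auto
  ultimately show ?case using feas_Prop.hyps by (auto intro!: feasible.feas_Prop)
next
  case (feas_Rej \<sigma> r h)
  have "feasible B \<sigma>"
  proof (rule feas_Rej.IH)
    show "\<And>r h. Prop r h \<in> set \<sigma> \<Longrightarrow> h \<in> set (rlist A r) \<Longrightarrow>
          h \<in> set (rlist B r) \<and> (\<forall>h'. precedes (rlist B r) h' h \<longrightarrow> precedes (rlist A r) h' h)"
      using feas_Rej.prems(1) by simp
    show "\<And>M r h. M \<subseteq> props \<sigma> \<Longrightarrow> ousted A M r h \<Longrightarrow> ousted B M r h"
      using feas_Rej.prems(2) by simp
  qed
  moreover have "ousted B (props \<sigma>) r h" using feas_Rej.prems(2)[of "props \<sigma>"] feas_Rej.hyps by auto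
  ultimately show ?case using feas_Rej.hyps by (auto intro!: feasible.feas_Rej)
qed

lemma feasible_distinct: "feasible I \<sigma> \<Longrightarrow> distinct \<sigma>"
  by (induction rule: feasible.induct) (auto simp: in_props in_rejs)

definition evs :: "('r,'h) hr_instance \<Rightarrow> ('r,'h) event set" where
  "evs I = (\<lambda>(r,h). Prop r h) ` (Res I \<times> Hosp I) \<union> (\<lambda>(r,h). Rej r h) ` (Res I \<times> Hosp I)"

lemma finite_evs: "wf_instance I \<Longrightarrow> finite (evs I)"
  by (auto simp: evs_def wf_instance_def)

lemma feasible_evs: "wf_instance I \<Longrightarrow> feasible I \<sigma> \<Longrightarrow> set \<sigma> \<subseteq> evs I"
proof
  fix e assume w: "wf_instance I" and f: "feasible I \<sigma>" and e: "e \<in> set \<sigma>"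
  show "e \<in> evs I"
  proof (cases e)
    case (Prop r h)
    then have "(r,h) \<in> props \<sigma>" using e by (simp add: in_props)
    then show ?thesis using feasible_props_RH[OF w f] Prop by (force simp: evs_def)
  next
    case (Rej r h)
    then have "(r,h) \<in> props \<sigma>" using e feasible_inv[OF f] by (auto simp: in_rejs)
    then show ?thesis using feasible_props_RH[OF w f] Rej by (force simp: evs_def)
  qed
qed

lemma feasible_length: "wf_instance I \<Longrightarrow> feasible I \<sigma> \<Longrightarrow> length \<sigma> < Suc (card (evs I))"
  using feasible_evs[of I \<sigma>] feasible_distinct[of I \<sigma>] finite_evs[of I]
  by (metis card_mono distinct_card less_Suc_eq_le)

lemma max_exists: "wf_instance I \<Longrightarrow> \<exists>\<sigma>. maximal_feasible I \<sigma>"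
proof -
  assume w: "wf_instance I"
  obtain \<sigma> where f: "feasible I \<sigma>" and g: "\<forall>y. feasible I y \<longrightarrow> length y \<le> length \<sigma>"
    using ex_has_greatest_nat[of "feasible I" "[]" length "Suc (card (evs I))"]
      feasible.feas_Nil feasible_length[OF w] by blast
  have "\<not> feasible I (\<sigma> @ [e])" for e using g[rule_format, of "\<sigma> @ [e]"] by auto
  then show ?thesis using f unfolding maximal_feasible_def by blast
qed

lemma max_seq_max: "wf_instance I \<Longrightarrow> maximal_feasible I (max_seq I)"
  unfolding max_seq_def using max_exists someI_ex by metis

lemma inclusion:
  assumes m: "maximal_feasible I \<sigma>" and t: "feasible I \<tau>"
  shows "set \<tau> \<subseteq> set \<sigma>"
  using t
proof (induction rule: feasible.induct)
  case feas_Nil then show ?case by simp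
next
  case (feas_Prop \<tau> r h)
  have fs: "feasible I \<sigma>" and mx: "\<And>e. \<not> feasible I (\<sigma> @ [e])" using m by (auto simp: maximal_feasible_def)
  have rj: "rejs \<tau> \<subseteq> rejs \<sigma>" using feas_Prop.IH by (auto simp: rejs_def)
  have "Prop r h \<in> set \<sigma>"
  proof (rule ccontr)
    assume np: "Prop r h \<notin> set \<sigma>"
    have "r \<notin> res_of (tents \<sigma>)"
    proof
      assume "r \<in> res_of (tents \<sigma>)"
      then obtain h0 where h0: "(r,h0) \<in> tents \<sigma>" by (auto simp: res_of_def)
      then have p0: "Prop r h0 \<in> set \<sigma>" and nr0: "(r,h0) \<notin> rejs \<sigma>" by (auto simp: tents_def in_props)
      have o0: "h0 \<in> set (rlist I r)" "\<forall>h'. precedes (rlist I r) h' h0 \<longrightarrow> (r,h') \<in> rejs \<sigma>"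
        using prop_order[OF fs p0] by auto
      have "h0 \<noteq> h" using p0 np by auto
      then have "precedes (rlist I r) h0 h \<or> precedes (rlist I r) h h0"
        using precedes_total o0(1) feas_Prop.hyps(4) by metis
      then show False
      proof
        assume "precedes (rlist I r) h0 h"
        then show False using feas_Prop.hyps(5) rj nr0 by auto
      next
        assume "precedes (rlist I r) h h0"
        then have "(r,h) \<in> rejs \<sigma>" using o0 by auto
        then show False using feasible_inv[OF fs] np by (auto simp: in_props)
      qed
    qed
    then have "feasible I (\<sigma> @ [Prop r h])"
      using np feas_Prop.hyps rj by (auto simp: in_props intro!: feasible.feas_Prop fs)
    then show False using mx by blast
  qed
  then show ?case using feas_Prop.IH by auto
next
  case (feas_Rej \<tau> r h)
  have fs: "feasible I \<sigma>" and mx: "\<And>e. \<not> feasible I (\<sigma> @ [e])" using m by (auto simp: maximal_feasible_def)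
  have pp: "props \<tau> \<subseteq> props \<sigma>" using feas_Rej.IH by (auto simp: props_def)
  have "Rej r h \<in> set \<sigma>"
  proof (rule ccontr)
    assume "Rej r h \<notin> set \<sigma>"
    then have "feasible I (\<sigma> @ [Rej r h])"
      using ousted_mono[OF feas_Rej.hyps(2) pp] by (auto simp: in_rejs intro!: feasible.feas_Rej fs)
    then show False using mx by blast
  qed
  then show ?case using feas_Rej.IH by auto
qed




lemma card_ge1: "finite A \<Longrightarrow> x \<in> A \<Longrightarrow> card A \<ge> 1"
  by (metis One_nat_def Suc_leI card_gt_0_iff empty_iff)

lemma ousted_not_tent: "maximal_feasible J \<sigma> \<Longrightarrow> ousted J (props \<sigma>) x k \<Longrightarrow> (x,k) \<notin> tents \<sigma>"
proof
  assume m: "maximal_feasible J \<sigma>" and o: "ousted J (props \<sigma>) x k" and t: "(x,k) \<in> tents \<sigma>"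
  then have nr: "(x,k) \<notin> rejs \<sigma>" by (simp add: tents_def)
  have f: "feasible J \<sigma>" and mx: "\<And>e. \<not> feasible J (\<sigma> @ [e])" using m by (simp_all add: maximal_feasible_def)
  have "feasible J (\<sigma> @ [Rej x k])" using f o nr by (rule feasible.feas_Rej)
  then show False using mx by blast
qed

lemma ousted_cong: "hlist A = hlist B \<Longrightarrow> quota A = quota B \<Longrightarrow> ousted A M x k = ousted B M x k"
  by (simp add: ousted_def)


lemma ousted_ext:
  assumes hl: "hlist J k = hlist I k @ ys" and q: "quota J k = quota I k" and o: "ousted I M x k"
  shows "ousted J M x k"
proof -
  let ?R = "res_h k M"
  have c1: "card (set (hlist I k) \<inter> ?R) \<le> card (set (hlist J k) \<inter> ?R)"
    by (rule card_mono) (auto simp: hl)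
  have o1: "(x,k) \<in> M" "card (set (hlist I k) \<inter> ?R) \<ge> quota I k"
    and o2: "x \<notin> set (hlist I k) \<or> card {r'\<in>?R. precedes (hlist I k) r' x} \<ge> quota I k"
    using o by (auto simp: ousted_def)
  have "x \<notin> set (hlist J k) \<or> card {r'\<in>?R. precedes (hlist J k) r' x} \<ge> quota J k"
  proof (cases "x \<in> set (hlist I k)")
    case True
    then have cI: "card {r'\<in>?R. precedes (hlist I k) r' x} \<ge> quota I k" using o2 by simp
    have fJ: "finite {r'\<in>?R. precedes (hlist J k) r' x}"
      by (rule finite_subset[of _ "set (hlist J k)"]) (auto dest: precedes_set)
    have "{r'\<in>?R. precedes (hlist I k) r' x} \<subseteq> {r'\<in>?R. precedes (hlist J k) r' x}"
      by (auto simp: hl precedes_append)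
    then have "card {r'\<in>?R. precedes (hlist I k) r' x} \<le> card {r'\<in>?R. precedes (hlist J k) r' x}"
      using fJ by (rule card_mono[rotated])
    then show ?thesis using cI q by simp
  next
    case False
    show ?thesis
    proof (cases "x \<in> set (hlist J k)")
      case True
      then have "x \<in> set ys" using False hl by simp
      then have "set (hlist I k) \<inter> ?R \<subseteq> {r'\<in>?R. precedes (hlist J k) r' x}"
        by (auto simp: hl precedes_append)
      moreover have fJ: "finite {r'\<in>?R. precedes (hlist J k) r' x}"
        by (rule finite_subset[of _ "set (hlist J k)"]) (auto dest: precedes_set)
      ultimately have "card (set (hlist I k) \<inter> ?R) \<le> card {r'\<in>?R. precedes (hlist J k) r' x}"
        by (rule card_mono[rotated])
      then show ?thesis using o1 q by simp
    qed simp
  qed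
  moreover have "card (set (hlist J k) \<inter> ?R) \<ge> quota J k" using o1(2) c1 q by linarith
  ultimately show ?thesis using o1(1) unfolding ousted_def by blast
qed

lemma completion_wf: "completion I J \<Longrightarrow> wf_instance J"
  by (simp add: completion_def extension_def)

lemma ext_feasible:
  assumes w: "wf_instance I" and e: "extension I J" and f: "feasible I \<sigma>"
  shows "feasible J \<sigma>"
  using f
proof (rule feasible_transfer)
  have wJ: "wf_instance J" and RH: "Res J = Res I" "Hosp J = Hosp I"
    and rl: "\<forall>r\<in>Res I. \<exists>ys. rlist J r = rlist I r @ ys"
    and hl: "\<forall>h\<in>Hosp I. \<exists>ys. hlist J h = hlist I h @ ys"
    and q: "\<forall>h\<in>Hosp I. quota J h = quota I h" using e by (simp_all add: extension_def)
  fix r h assume p: "Prop r h \<in> set \<sigma>" and hr: "h \<in> set (rlist I r)"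
  have r: "r \<in> Res I" using wf_rlist[OF w hr] by simp
  obtain ys where ys: "rlist J r = rlist I r @ ys" using rl r by blast
  have "\<forall>r\<in>Res J. distinct (rlist J r) \<and> set (rlist J r) \<subseteq> Hosp J" using wJ by (simp add: wf_instance_def)
  then have d: "distinct (rlist J r)" using r RH by simp
  show "h \<in> set (rlist J r) \<and> (\<forall>h'. precedes (rlist J r) h' h \<longrightarrow> precedes (rlist I r) h' h)"
    using hr d precedes_prefix[of h "rlist I r" ys] by (simp add: ys)
next
  have hl: "\<forall>h\<in>Hosp I. \<exists>ys. hlist J h = hlist I h @ ys"
    and q: "\<forall>h\<in>Hosp I. quota J h = quota I h" using e by (simp_all add: extension_def)
  fix M x k assume M: "M \<subseteq> props \<sigma>" and o: "ousted I M x k"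
  have "(x,k) \<in> props \<sigma>" using ousted_in[OF o] M by auto
  then have k: "k \<in> Hosp I" using feasible_props_RH[OF w f] by simp
  obtain ys where "hlist J k = hlist I k @ ys" using hl k by blast
  then show "ousted J M x k" using ousted_ext[of J k I _ M x] q k o by simp
qed

lemma max_seq_sub:
  assumes w: "wf_instance I" and e: "extension I J"
  shows "set (max_seq I) \<subseteq> set (max_seq J)"
proof -
  have wJ: "wf_instance J" using e by (simp add: extension_def)
  show ?thesis using inclusion[OF max_seq_max[OF wJ] ext_feasible[OF w e max_seq_max[OF w, unfolded maximal_feasible_def, THEN conjunct1]]] .
qed

lemma propI_mono: "wf_instance I \<Longrightarrow> extension I J \<Longrightarrow> propI I \<subseteq> propI J"
  using max_seq_sub unfolding propI_def props_def by blast

lemma K_core: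
  assumes w: "wf_instance I" and e: "extension I J" and p': "(r',h) \<in> propI J"
    and pr: "precedes (hlist J h) r' r" and p: "(r,h) \<in> propI I" and q: "quota J h = 1"
  shows "(r,h) \<notin> tentI J"
proof -
  have wJ: "wf_instance J" using e by (simp add: extension_def)
  let ?M = "props (max_seq J)"
  have pJ: "(r,h) \<in> ?M" using propI_mono[OF w e] p by (auto simp: propI_def)
  have r'M: "r' \<in> res_h h ?M" using p' by (simp add: propI_def res_h_def)
  have r'L: "r' \<in> set (hlist J h)" using precedes_set[OF pr] by simp
  have "card (set (hlist J h) \<inter> res_h h ?M) \<ge> 1"
    using r'M r'L by (intro card_ge1) auto
  moreover have "card {x\<in>res_h h ?M. precedes (hlist J h) x r} \<ge> 1"
  proof -
    have "finite {x\<in>res_h h ?M. precedes (hlist J h) x r}"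
      by (rule finite_subset[of _ "set (hlist J h)"]) (auto dest: precedes_set)
    moreover have "r' \<in> {x\<in>res_h h ?M. precedes (hlist J h) x r}" using r'M pr by simp
    ultimately show ?thesis by (rule card_ge1)
  qed
  ultimately have "ousted J ?M r h" using pJ q by (simp add: ousted_def)
  then show ?thesis using ousted_not_tent[OF max_seq_max[OF wJ]] by (simp add: tentI_def)
qed

lemma K_prop:
  assumes c: "completion I J" and f: "feasible J \<sigma>" and nr: "r' \<notin> res_of (tents \<sigma>)"
    and np: "(r',h) \<notin> props \<sigma>" and hr: "h \<in> set (rlist J r')"
    and pre: "\<forall>h'. precedes (rlist J r') h' h \<longrightarrow> (r',h') \<in> rejs \<sigma>"
  shows "(r',h) \<in> propI J"
proof -
  have wJ: "wf_instance J" using c by (rule completion_wf)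
  have "feasible J (\<sigma> @ [Prop r' h])" using f nr np hr pre by (rule feasible.feas_Prop)
  then have "Prop r' h \<in> set (max_seq J)" using inclusion[OF max_seq_max[OF wJ]] by fastforce
  then show ?thesis by (simp add: propI_def in_props)
qed

definition lst :: "'a set \<Rightarrow> 'a list" where
  "lst A = (SOME xs. set xs = A \<and> distinct xs)"

lemma lst: "finite A \<Longrightarrow> set (lst A) = A \<and> distinct (lst A)"
  unfolding lst_def by (rule someI_ex, erule finite_distinct_list)

lemma exists_completion:
  assumes w: "wf_instance I"
  shows "\<exists>J. completion I J"
proof -
  define J where "J = I\<lparr>rlist := \<lambda>r. if r \<in> Res I then rlist I r @ lst (Hosp I - set (rlist I r)) else [],
                     hlist := \<lambda>h. if h \<in> Hosp I then hlist I h @ lst (Res I - set (hlist I h)) else []\<rparr>"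
  have fin: "finite (Res I)" "finite (Hosp I)" and qp: "\<forall>h\<in>Hosp I. quota I h > 0" using w by (simp_all add: wf_instance_def)
  have rl: "rlist J r = (if r \<in> Res I then rlist I r @ lst (Hosp I - set (rlist I r)) else [])" for r
    by (simp add: J_def)
  have hl: "hlist J h = (if h \<in> Hosp I then hlist I h @ lst (Res I - set (hlist I h)) else [])" for h
    by (simp add: J_def)
  have o: "Res J = Res I" "Hosp J = Hosp I" "quota J = quota I" by (simp_all add: J_def)
  have ws: "\<forall>r\<in>Res I. distinct (rlist I r) \<and> set (rlist I r) \<subseteq> Hosp I"
    "\<forall>h\<in>Hosp I. distinct (hlist I h) \<and> set (hlist I h) \<subseteq> Res I"
    using w by (simp_all add: wf_instance_def)
  have A: "distinct (rlist J r) \<and> set (rlist J r) = Hosp I" if r: "r \<in> Res I" for r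
  proof -
    let ?X = "lst (Hosp I - set (rlist I r))"
    have X: "set ?X = Hosp I - set (rlist I r)" "distinct ?X" using lst[of "Hosp I - set (rlist I r)"] fin(2) by simp_all
    have e: "rlist J r = rlist I r @ ?X" using r by (simp add: rl)
    have d: "distinct (rlist I r)" "set (rlist I r) \<subseteq> Hosp I" using ws(1) r by simp_all
    show ?thesis unfolding e using X d by auto
  qed
  have B: "distinct (hlist J h) \<and> set (hlist J h) = Res I" if h: "h \<in> Hosp I" for h
  proof -
    let ?X = "lst (Res I - set (hlist I h))"
    have X: "set ?X = Res I - set (hlist I h)" "distinct ?X" using lst[of "Res I - set (hlist I h)"] fin(1) by simp_all
    have e: "hlist J h = hlist I h @ ?X" using h by (simp add: hl)
    have d: "distinct (hlist I h)" "set (hlist I h) \<subseteq> Res I" using ws(2) h by simp_all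
    show ?thesis unfolding e using X d by auto
  qed
  have c1: "finite (Res J)" "finite (Hosp J)" using fin by (simp_all add: o)
  have c3: "\<forall>h\<in>Hosp J. quota J h > 0" using qp by (simp add: o)
  have c4: "\<forall>r\<in>Res J. distinct (rlist J r) \<and> set (rlist J r) \<subseteq> Hosp J" using A by (simp add: o)
  have c5: "\<forall>h\<in>Hosp J. distinct (hlist J h) \<and> set (hlist J h) \<subseteq> Res J" using B by (simp add: o)
  have c6: "\<forall>r. r \<notin> Res J \<longrightarrow> rlist J r = []" by (simp add: o rl)
  have c7: "\<forall>h. h \<notin> Hosp J \<longrightarrow> hlist J h = []" by (simp add: o hl)
  have wJ: "wf_instance J" unfolding wf_instance_def using c1 c3 c4 c5 c6 c7 by (intro conjI) (assumption+)
  have cJ: "complete_instance J" unfolding complete_instance_def using A B by (simp add: o)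
  have e1: "\<forall>r\<in>Res I. \<exists>ys. rlist J r = rlist I r @ ys" by (simp add: rl)
  have e2: "\<forall>h\<in>Hosp I. \<exists>ys. hlist J h = hlist I h @ ys" by (simp add: hl)
  have "completion I J" unfolding completion_def extension_def using wJ cJ e1 e2 o by simp
  then show ?thesis by blast
qed




lemma completion_facts:
  assumes c: "completion I J"
  shows "wf_instance J" "Res J = Res I" "Hosp J = Hosp I" "\<forall>h\<in>Hosp I. quota J h = quota I h"
    "\<forall>r\<in>Res I. \<exists>ys. rlist J r = rlist I r @ ys" "\<forall>h\<in>Hosp I. \<exists>ys. hlist J h = hlist I h @ ys"
    "\<forall>r\<in>Res I. set (rlist J r) = Hosp I" "\<forall>h\<in>Hosp I. set (hlist J h) = Res I"
    "\<forall>r\<in>Res I. distinct (rlist J r)" "\<forall>h\<in>Hosp I. distinct (hlist J h)"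
proof -
  have e: "extension I J" and cp: "complete_instance J" using c by (simp_all add: completion_def)
  show w: "wf_instance J" and R: "Res J = Res I" and H: "Hosp J = Hosp I"
    and "\<forall>h\<in>Hosp I. quota J h = quota I h"
    "\<forall>r\<in>Res I. \<exists>ys. rlist J r = rlist I r @ ys" "\<forall>h\<in>Hosp I. \<exists>ys. hlist J h = hlist I h @ ys"
    using e by (simp_all add: extension_def)
  show "\<forall>r\<in>Res I. set (rlist J r) = Hosp I" "\<forall>h\<in>Hosp I. set (hlist J h) = Res I"
    using cp R H by (simp_all add: complete_instance_def)
  have "\<forall>r\<in>Res J. distinct (rlist J r) \<and> set (rlist J r) \<subseteq> Hosp J"
       "\<forall>h\<in>Hosp J. distinct (hlist J h) \<and> set (hlist J h) \<subseteq> Res J"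
    using w by (simp_all add: wf_instance_def)
  then show "\<forall>r\<in>Res I. distinct (rlist J r)" "\<forall>h\<in>Hosp I. distinct (hlist J h)"
    using R H by simp_all
qed

lemma completion_upd_h:
  assumes c: "completion I J" and h: "h \<in> Hosp I" and d: "distinct L" and s: "set L = Res I"
    and p: "L = hlist I h @ zs"
  shows "completion I (J\<lparr>hlist := (hlist J)(h := L)\<rparr>)"
proof -
  let ?J = "J\<lparr>hlist := (hlist J)(h := L)\<rparr>"
  have wJ: "wf_instance J" and R: "Res J = Res I" and H: "Hosp J = Hosp I"
    and q: "\<forall>h\<in>Hosp I. quota J h = quota I h"
    and rl: "\<forall>r\<in>Res I. \<exists>ys. rlist J r = rlist I r @ ys" and hl: "\<forall>h\<in>Hosp I. \<exists>ys. hlist J h = hlist I h @ ys"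
    and cr: "\<forall>r\<in>Res I. set (rlist J r) = Hosp I" and ch: "\<forall>h\<in>Hosp I. set (hlist J h) = Res I"
    using completion_facts[OF c] by blast+
  have w: "finite (Res J)" "finite (Hosp J)" "\<forall>h\<in>Hosp J. quota J h > 0"
    "\<forall>r\<in>Res J. distinct (rlist J r) \<and> set (rlist J r) \<subseteq> Hosp J"
    "\<forall>h\<in>Hosp J. distinct (hlist J h) \<and> set (hlist J h) \<subseteq> Res J"
    "\<forall>r. r \<notin> Res J \<longrightarrow> rlist J r = []" "\<forall>h. h \<notin> Hosp J \<longrightarrow> hlist J h = []"
    using wJ by (simp_all add: wf_instance_def)
  have c1: "finite (Res ?J)" "finite (Hosp ?J)" "\<forall>h\<in>Hosp ?J. quota ?J h > 0"
    "\<forall>r\<in>Res ?J. distinct (rlist ?J r) \<and> set (rlist ?J r) \<subseteq> Hosp ?J"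
    using w by simp_all
  have c2: "\<forall>h'\<in>Hosp ?J. distinct (hlist ?J h') \<and> set (hlist ?J h') \<subseteq> Res ?J"
    using w(5) d s R by simp
  have c3: "\<forall>r. r \<notin> Res ?J \<longrightarrow> rlist ?J r = []" using w(6) by simp
  have c4: "\<forall>h'. h' \<notin> Hosp ?J \<longrightarrow> hlist ?J h' = []" using w(7) h H by simp
  have wJ1: "wf_instance ?J" unfolding wf_instance_def using c1 c2 c3 c4 by (intro conjI) (assumption+)
  have cp: "complete_instance ?J" unfolding complete_instance_def using cr ch s R H by simp
  have e1: "\<forall>h'\<in>Hosp I. \<exists>ys. hlist ?J h' = hlist I h' @ ys" using hl p by simp
  show ?thesis unfolding completion_def extension_def using wJ1 cp e1 R H q rl by simp
qed

lemma completion_upd_r: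
  assumes c: "completion I J" and r: "r \<in> Res I" and d: "distinct L" and s: "set L = Hosp I"
    and p: "L = rlist I r @ zs"
  shows "completion I (J\<lparr>rlist := (rlist J)(r := L)\<rparr>)"
proof -
  let ?J = "J\<lparr>rlist := (rlist J)(r := L)\<rparr>"
  have wJ: "wf_instance J" and R: "Res J = Res I" and H: "Hosp J = Hosp I"
    and q: "\<forall>h\<in>Hosp I. quota J h = quota I h"
    and rl: "\<forall>r\<in>Res I. \<exists>ys. rlist J r = rlist I r @ ys" and hl: "\<forall>h\<in>Hosp I. \<exists>ys. hlist J h = hlist I h @ ys"
    and cr: "\<forall>r\<in>Res I. set (rlist J r) = Hosp I" and ch: "\<forall>h\<in>Hosp I. set (hlist J h) = Res I"
    using completion_facts[OF c] by blast+
  have w: "finite (Res J)" "finite (Hosp J)" "\<forall>h\<in>Hosp J. quota J h > 0"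
    "\<forall>r\<in>Res J. distinct (rlist J r) \<and> set (rlist J r) \<subseteq> Hosp J"
    "\<forall>h\<in>Hosp J. distinct (hlist J h) \<and> set (hlist J h) \<subseteq> Res J"
    "\<forall>r. r \<notin> Res J \<longrightarrow> rlist J r = []" "\<forall>h. h \<notin> Hosp J \<longrightarrow> hlist J h = []"
    using wJ by (simp_all add: wf_instance_def)
  have c1: "finite (Res ?J)" "finite (Hosp ?J)" "\<forall>h\<in>Hosp ?J. quota ?J h > 0"
    "\<forall>h\<in>Hosp ?J. distinct (hlist ?J h) \<and> set (hlist ?J h) \<subseteq> Res ?J"
    using w by simp_all
  have c2: "\<forall>r'\<in>Res ?J. distinct (rlist ?J r') \<and> set (rlist ?J r') \<subseteq> Hosp ?J"
    using w(4) d s H by simp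
  have c3: "\<forall>r'. r' \<notin> Res ?J \<longrightarrow> rlist ?J r' = []" using w(6) r R by simp
  have c4: "\<forall>h'. h' \<notin> Hosp ?J \<longrightarrow> hlist ?J h' = []" using w(7) by simp
  have wJ1: "wf_instance ?J" unfolding wf_instance_def using c1 c2 c3 c4 by (intro conjI) (assumption+)
  have cp: "complete_instance ?J" unfolding complete_instance_def using cr ch s R H by simp
  have e1: "\<forall>r'\<in>Res I. \<exists>ys. rlist ?J r' = rlist I r' @ ys" using rl p by simp
  show ?thesis unfolding completion_def extension_def using wJ1 cp e1 R H q hl by simp
qed




lemma step1:
  assumes c: "completion I J'" and rR: "r \<in> Res I" and r'R: "r' \<in> Res I" and ne: "r \<noteq> r'"
    and hH: "h \<in> Hosp I" and cond: "precedes (hlist I h) r' r \<or> r \<notin> set (hlist I h)"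
  shows "\<exists>J1. completion I J1 \<and> precedes (hlist J1 h) r' r \<and> rlist J1 = rlist J' \<and> quota J1 = quota J'
     \<and> (\<forall>M x k. r' \<notin> res_h h M \<longrightarrow> ousted J' M x k \<longrightarrow> ousted J1 M x k)"
proof (cases "precedes (hlist J' h) r' r")
  case True
  then show ?thesis using c by blast
next
  case False
  have hl: "\<forall>h\<in>Hosp I. \<exists>ys. hlist J' h = hlist I h @ ys" and ch: "\<forall>h\<in>Hosp I. set (hlist J' h) = Res I"
    and dh: "\<forall>h\<in>Hosp I. distinct (hlist J' h)"
    using completion_facts[OF c] by blast+
  obtain ys where L: "hlist J' h = hlist I h @ ys" using hl hH by blast
  have dL: "distinct (hlist I h @ ys)"
  proof -
    have "distinct (hlist J' h)" using dh hH by blast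
    then show ?thesis by (simp only: L)
  qed
  have sL: "set (hlist I h @ ys) = Res I"
  proof -
    have "set (hlist J' h) = Res I" using ch hH by blast
    then show ?thesis by (simp only: L)
  qed
  have nr: "r \<notin> set (hlist I h)"
  proof
    assume a: "r \<in> set (hlist I h)"
    then have "precedes (hlist I h) r' r" using cond by blast
    then have "precedes (hlist J' h) r' r" by (simp add: L precedes_append)
    then show False using False by blast
  qed
  have ry: "r \<in> set ys" using sL rR nr by auto
  have nr': "r' \<notin> set (hlist I h)"
  proof
    assume a: "r' \<in> set (hlist I h)"
    then have "precedes (hlist J' h) r' r" using ry by (simp add: L precedes_append)
    then show False using False by blast
  qed
  have r'y: "r' \<in> set ys" using sL r'R nr' by auto
  define E' where "E' = filter (\<lambda>x. x \<noteq> r') ys"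
  have rE: "r \<in> set E'" using ry ne by (simp add: E'_def)
  obtain us vs where uv: "E' = us @ r # vs" using split_list[OF rE] by blast
  have sE: "set E' = set ys - {r'}" by (auto simp: E'_def)
  have nuv: "r' \<notin> set us" "r' \<notin> set vs" using sE uv by auto
  define L1 where "L1 = hlist I h @ us @ r' # r # vs"
  have dE: "distinct (hlist I h @ E')" using dL by (auto simp: E'_def)
  have dL1: "distinct L1" using dE nuv nr' ne unfolding L1_def uv by auto
  have sL1: "set L1 = Res I"
  proof -
    have "set L1 = set (hlist I h) \<union> set E' \<union> {r'}" unfolding L1_def uv by auto
    also have "\<dots> = set (hlist I h @ ys)" using sE r'y by auto
    finally show ?thesis using sL by simp
  qed
  have fL1: "filter (\<lambda>x. x \<noteq> r') L1 = filter (\<lambda>x. x \<noteq> r') (hlist J' h)"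
  proof -
    have a: "filter (\<lambda>x. x \<noteq> r') (hlist I h) = hlist I h" using nr' by (auto simp: filter_id_conv)
    have b: "filter (\<lambda>x. x \<noteq> r') us = us" "filter (\<lambda>x. x \<noteq> r') vs = vs" using nuv by (auto simp: filter_id_conv)
    have "filter (\<lambda>x. x \<noteq> r') L1 = hlist I h @ E'" unfolding L1_def uv using a b ne by simp
    also have "\<dots> = filter (\<lambda>x. x \<noteq> r') (hlist J' h)" using a by (simp add: L E'_def)
    finally show ?thesis .
  qed
  have pe: "precedes L1 a b \<longleftrightarrow> precedes (hlist J' h) a b" if "a \<noteq> r'" "b \<noteq> r'" for a b
    using precedes_filter[of "\<lambda>x. x \<noteq> r'" a b L1] precedes_filter[of "\<lambda>x. x \<noteq> r'" a b "hlist J' h"] fL1 that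
    by simp
  have pr: "precedes L1 r' r" unfolding L1_def by (simp add: precedes_append precedes_Cons)
  define J1 where "J1 = J'\<lparr>hlist := (hlist J')(h := L1)\<rparr>"
  have cJ1: "completion I J1" unfolding J1_def
    by (rule completion_upd_h[OF c hH dL1 sL1]) (simp add: L1_def)
  have ous: "ousted J1 M x k" if nM: "r' \<notin> res_h h M" and o: "ousted J' M x k" for M x k
  proof (cases "k = h")
    case False
    then show ?thesis using o by (simp add: J1_def ousted_def)
  next
    case True
    have xM: "x \<noteq> r'" using ousted_in[OF o] nM True by (auto simp: res_h_def)
    have s1: "set (hlist J1 h) = set (hlist J' h)" using sL1 sL L by (simp add: J1_def)
    have s2: "{y\<in>res_h h M. precedes (hlist J1 h) y x} = {y\<in>res_h h M. precedes (hlist J' h) y x}"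
    proof -
      have "y \<in> res_h h M \<Longrightarrow> precedes L1 y x = precedes (hlist J' h) y x" for y
        using pe[of y x] xM nM by blast
      then show ?thesis by (auto simp: J1_def)
    qed
    have q: "quota J1 = quota J'" by (simp add: J1_def)
    show ?thesis using o True s1 s2 q unfolding ousted_def by simp
  qed
  have "precedes (hlist J1 h) r' r" using pr by (simp add: J1_def)
  moreover have "rlist J1 = rlist J'" "quota J1 = quota J'" by (simp_all add: J1_def)
  ultimately show ?thesis using cJ1 ous by blast
qed

lemma step2:
  assumes c: "completion I J1" and r'R: "r' \<in> Res I" and hH: "h \<in> Hosp I"
    and nh: "h \<notin> set (rlist I r')" and f: "feasible J1 \<sigma>"
    and pc: "\<forall>x. (r',x) \<in> props \<sigma> \<longrightarrow> x \<in> set (rlist I r')"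
  shows "\<exists>J. completion I J \<and> hlist J = hlist J1 \<and> quota J = quota J1 \<and> feasible J \<sigma>
     \<and> h \<in> set (rlist J r') \<and> (\<forall>h'. precedes (rlist J r') h' h \<longrightarrow> h' \<in> set (rlist I r'))"
proof -
  have rl: "\<forall>r\<in>Res I. \<exists>ys. rlist J1 r = rlist I r @ ys" and cr: "\<forall>r\<in>Res I. set (rlist J1 r) = Hosp I"
    and dr: "\<forall>r\<in>Res I. distinct (rlist J1 r)"
    using completion_facts[OF c] by blast+
  obtain E where E: "rlist J1 r' = rlist I r' @ E" using rl r'R by blast
  have dE: "distinct (rlist I r' @ E)"
  proof -
    have "distinct (rlist J1 r')" using dr r'R by blast
    then show ?thesis by (simp only: E)
  qed
  have sE: "set (rlist I r' @ E) = Hosp I"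
  proof -
    have "set (rlist J1 r') = Hosp I" using cr r'R by blast
    then show ?thesis by (simp only: E)
  qed
  define L where "L = rlist I r' @ h # filter (\<lambda>x. x \<noteq> h) E"
  have dL: "distinct L" using dE nh unfolding L_def by auto
  have sL: "set L = Hosp I" using sE hH unfolding L_def by auto
  define J where "J = J1\<lparr>rlist := (rlist J1)(r' := L)\<rparr>"
  have cJ: "completion I J" unfolding J_def
    by (rule completion_upd_r[OF c r'R dL sL]) (simp add: L_def)
  have hJ: "hlist J = hlist J1" "quota J = quota J1" by (simp_all add: J_def)
  have fJ: "feasible J \<sigma>"
    using f
  proof (rule feasible_transfer)
    fix x k assume p: "Prop x k \<in> set \<sigma>" and k: "k \<in> set (rlist J1 x)"
    show "k \<in> set (rlist J x) \<and> (\<forall>h'. precedes (rlist J x) h' k \<longrightarrow> precedes (rlist J1 x) h' k)"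
    proof (cases "x = r'")
      case True
      have kI: "k \<in> set (rlist I r')" using pc p True by (simp add: in_props)
      have "precedes L h' k \<Longrightarrow> precedes (rlist J1 r') h' k" for h'
        using precedes_prefix[of k "rlist I r'" "h # filter (\<lambda>x. x \<noteq> h) E" h'] kI dL
        by (simp add: L_def E precedes_append)
      then show ?thesis using True kI by (simp add: J_def L_def)
    next
      case False
      then show ?thesis using k by (simp add: J_def)
    qed
  next
    fix M x k assume "M \<subseteq> props \<sigma>" and o: "ousted J1 M x k"
    then show "ousted J M x k" using ousted_cong[of J J1 M x k] hJ by simp
  qed
  have hr: "h \<in> set (rlist J r')" by (simp add: J_def L_def)
  have pre: "h' \<in> set (rlist I r')" if "precedes (rlist J r') h' h" for h'
  proof -
    have "precedes L h' h" using that by (simp add: J_def)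
    then show ?thesis unfolding L_def using nh
      by (auto simp: precedes_append precedes_Cons dest: precedes_set)
  qed
  show ?thesis using cJ hJ fJ hr pre by blast
qed




lemma max_facts: "wf_instance I \<Longrightarrow> feasible I (max_seq I)"
  using max_seq_max unfolding maximal_feasible_def by blast

lemma exists_good:
  assumes w: "wf_instance I" and rm: "resident_minimal I" and r'R: "r' \<in> Res I"
    and nf: "\<forall>k. (r',k) \<in> tentI I \<longrightarrow> \<not> finalizable I r' k"
  shows "\<exists>J \<sigma>. completion I J \<and> feasible J \<sigma> \<and> r' \<notin> res_of (tents \<sigma>)
     \<and> (\<forall>x\<in>set (rlist I r'). (r',x) \<in> rejs \<sigma>) \<and> (\<forall>x. (r',x) \<in> props \<sigma> \<longrightarrow> x \<in> set (rlist I r'))"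
proof -
  let ?S = "max_seq I"
  have fS: "feasible I ?S" using max_facts[OF w] .
  have pS: "props ?S = {(r,h). h \<in> set (rlist I r)}" using rm by (simp add: resident_minimal_def propI_def)
  show ?thesis
  proof (cases "r' \<in> res_of (tentI I)")
    case False
    obtain J0 where c: "completion I J0" using exists_completion[OF w] by blast
    have e: "extension I J0" using c by (simp add: completion_def)
    have f: "feasible J0 ?S" using ext_feasible[OF w e fS] .
    have nr: "r' \<notin> res_of (tents ?S)" using False by (simp add: tentI_def)
    have rj: "\<forall>x\<in>set (rlist I r'). (r',x) \<in> rejs ?S"
    proof
      fix x assume "x \<in> set (rlist I r')"
      then have "(r',x) \<in> props ?S" using pS by simp
      moreover have "(r',x) \<notin> tents ?S" using nr by (auto simp: res_of_def)
      ultimately show "(r',x) \<in> rejs ?S" by (simp add: tents_def)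
    qed
    have pc: "\<forall>x. (r',x) \<in> props ?S \<longrightarrow> x \<in> set (rlist I r')" using pS by simp
    show ?thesis using c f nr rj pc by blast
  next
    case True
    then obtain h'' where t: "(r',h'') \<in> tentI I" by (auto simp: res_of_def)
    then have "\<not> finalizable I r' h''" using nf by blast
    then obtain J' where c: "completion I J'" and nt: "(r',h'') \<notin> tentI J'"
      using t by (auto simp: finalizable_def)
    have e: "extension I J'" using c by (simp add: completion_def)
    have wJ: "wf_instance J'" using c by (rule completion_wf)
    have tp: "(r',h'') \<in> propI I" using t by (simp add: tentI_def propI_def tents_def)
    then have "(r',h'') \<in> propI J'" using propI_mono[OF w e] by blast
    then have "(r',h'') \<in> rejs (max_seq J')" using nt by (simp add: propI_def tentI_def tents_def)
    then have "Rej r' h'' \<in> set (max_seq J')" by (simp add: in_rejs)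
    then obtain ys zs where sp: "max_seq J' = ys @ Rej r' h'' # zs" and nys: "Rej r' h'' \<notin> set ys"
      using split_list_first by metis
    let ?\<sigma> = "ys @ [Rej r' h'']"
    have "feasible J' (?\<sigma> @ zs)" using max_facts[OF wJ] sp by simp
    then have f\<sigma>: "feasible J' ?\<sigma>" by (rule feasible_prefix)
    then have fy: "feasible J' ys" by (rule feasible_prefix)
    have "ousted J' (props ys) r' h''" using feasible_snocE[OF f\<sigma>] by simp
    then have py: "(r',h'') \<in> props ys" by (rule ousted_in)
    have nry: "(r',h'') \<notin> rejs ys" using nys by (simp add: in_rejs)
    have h''I: "h'' \<in> set (rlist I r')" using tp pS by (simp add: propI_def)
    have tS: "(r',h'') \<notin> rejs ?S" using t by (simp add: tentI_def tents_def)
    obtain E where E: "rlist J' r' = rlist I r' @ E" using completion_facts(5)[OF c] r'R by blast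
    have A: "\<forall>x. (r',x) \<in> props ?\<sigma> \<longrightarrow> x \<in> set (rlist I r')"
    proof (intro allI impI)
      fix x assume "(r',x) \<in> props ?\<sigma>"
      then have "Prop r' x \<in> set ys" by (simp add: in_props)
      from prop_order[OF fy this] have xs: "x \<in> set (rlist J' r')"
        and pre: "\<forall>h'. precedes (rlist J' r') h' x \<longrightarrow> (r',h') \<in> rejs ys" by blast+
      show "x \<in> set (rlist I r')"
      proof (rule ccontr)
        assume "x \<notin> set (rlist I r')"
        then have "x \<in> set E" using xs E by simp
        then have "precedes (rlist J' r') h'' x" using h''I by (simp add: E precedes_append)
        then show False using pre nry by blast
      qed
    qed
    have B: "\<forall>x\<in>set (rlist I r'). (r',x) \<in> rejs ?\<sigma>"
    proof
      fix x assume xI: "x \<in> set (rlist I r')"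
      show "(r',x) \<in> rejs ?\<sigma>"
      proof (cases "x = h''")
        case True then show ?thesis by simp
      next
        case False
        have np: "\<not> precedes (rlist I r') h'' x"
        proof
          assume a: "precedes (rlist I r') h'' x"
          have "Prop r' x \<in> set ?S" using xI pS by (simp add: in_props[symmetric])
          then have "(r',h'') \<in> rejs ?S" using prop_order[OF fS] a by blast
          then show False using tS by blast
        qed
        then have "precedes (rlist I r') x h''" using precedes_total[OF xI h''I False] by blast
        then have pj: "precedes (rlist J' r') x h''" by (simp add: E precedes_append)
        have "Prop r' h'' \<in> set ys" using py by (simp add: in_props)
        then have "(r',x) \<in> rejs ys" using prop_order[OF fy] pj by blast
        then show ?thesis by simp
      qed
    qed
    have C: "r' \<notin> res_of (tents ?\<sigma>)"
    proof
      assume "r' \<in> res_of (tents ?\<sigma>)"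
      then obtain k where k: "(r',k) \<in> tents ?\<sigma>" by (auto simp: res_of_def)
      then have k1: "(r',k) \<in> tents ys" and k2: "k \<noteq> h''" by (auto simp: tents_def)
      have "(r',h'') \<in> tents ys" using py nry by (simp add: tents_def)
      then have "k = h''" using tents_fun[OF fy k1] by blast
      then show False using k2 by blast
    qed
    show ?thesis using c f\<sigma> A B C by blast
  qed
qed

lemma build_J:
  assumes w: "wf_instance I" and rm: "resident_minimal I" and rR: "r \<in> Res I" and r'R: "r' \<in> Res I"
    and ne: "r \<noteq> r'" and hH: "h \<in> Hosp I" and qh: "quota I h = 1" and prh: "(r,h) \<in> propI I"
    and nh: "h \<notin> set (rlist I r')" and nf: "\<forall>k. (r',k) \<in> tentI I \<longrightarrow> \<not> finalizable I r' k"
    and cond: "precedes (hlist I h) r' r \<or> r \<notin> set (hlist I h)"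
  shows "\<exists>J. completion I J \<and> (r,h) \<notin> tentI J"
proof -
  obtain J' \<sigma> where c: "completion I J'" and f: "feasible J' \<sigma>" and nr: "r' \<notin> res_of (tents \<sigma>)"
    and rj: "\<forall>x\<in>set (rlist I r'). (r',x) \<in> rejs \<sigma>" and pc: "\<forall>x. (r',x) \<in> props \<sigma> \<longrightarrow> x \<in> set (rlist I r')"
    using exists_good[OF w rm r'R nf] by blast
  obtain J1 where c1: "completion I J1" and pr1: "precedes (hlist J1 h) r' r" and rl1: "rlist J1 = rlist J'"
    and ous: "\<forall>M x k. r' \<notin> res_h h M \<longrightarrow> ousted J' M x k \<longrightarrow> ousted J1 M x k"
    using step1[OF c rR r'R ne hH cond] by blast
  have np: "(r',h) \<notin> props \<sigma>" using pc nh by blast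
  have f1: "feasible J1 \<sigma>"
    using f
  proof (rule feasible_transfer)
    fix x k assume "Prop x k \<in> set \<sigma>" and "k \<in> set (rlist J' x)"
    then show "k \<in> set (rlist J1 x) \<and> (\<forall>h'. precedes (rlist J1 x) h' k \<longrightarrow> precedes (rlist J' x) h' k)"
      by (simp add: rl1)
  next
    fix M x k assume M: "M \<subseteq> props \<sigma>" and o: "ousted J' M x k"
    have "r' \<notin> res_h h M" using M np by (auto simp: res_h_def)
    then show "ousted J1 M x k" using ous o by blast
  qed
  obtain J where c2: "completion I J" and hl2: "hlist J = hlist J1" and f2: "feasible J \<sigma>"
    and hr: "h \<in> set (rlist J r')" and pre: "\<forall>h'. precedes (rlist J r') h' h \<longrightarrow> h' \<in> set (rlist I r')"
    using step2[OF c1 r'R hH nh f1 pc] by blast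
  have pre': "\<forall>h'. precedes (rlist J r') h' h \<longrightarrow> (r',h') \<in> rejs \<sigma>" using pre rj by blast
  have pJ: "(r',h) \<in> propI J" using K_prop[OF c2 f2 nr np hr pre'] .
  have e: "extension I J" using c2 by (simp add: completion_def)
  have qJ: "quota J h = 1" using completion_facts(4)[OF c2] hH qh by simp
  have "precedes (hlist J h) r' r" using pr1 hl2 by simp
  then have "(r,h) \<notin> tentI J" using K_core[OF w e pJ _ prh qJ] by blast
  then show ?thesis using c2 by blast
qed




lemma tentI_fun: "wf_instance I \<Longrightarrow> (r,h1) \<in> tentI I \<Longrightarrow> (r,h2) \<in> tentI I \<Longrightarrow> h1 = h2"
proof -
  assume w: "wf_instance I" and t1: "(r,h1) \<in> tentI I" and t2: "(r,h2) \<in> tentI I"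
  have f: "feasible I (max_seq I)" using max_facts[OF w] .
  show "h1 = h2" using tents_fun[OF f, of r h1 h2] t1 t2 by (simp add: tentI_def)
qed

lemma relevant_anti:
  assumes w: "wf_instance I" and s: "M \<subseteq> M'" and t: "M' \<subseteq> tentI I" and r: "relevant M' k y"
  shows "relevant M k y"
proof (cases "(y,k) \<in> M'")
  case True
  show ?thesis
  proof (cases "y \<in> res_of M")
    case True
    then obtain k2 where k2: "(y,k2) \<in> M" by (auto simp: res_of_def)
    have "k2 = k" using tentI_fun[OF w, of y k2 k] k2 s t \<open>(y,k) \<in> M'\<close> by blast
    then show ?thesis using k2 by (simp add: relevant_def)
  next
    case False
    then show ?thesis by (simp add: relevant_def)
  qed
next
  case False
  then have "y \<notin> res_of M'" using r by (simp add: relevant_def)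
  then have "y \<notin> res_of M" using s by (auto simp: res_of_def)
  then show ?thesis by (simp add: relevant_def)
qed

lemma endangered_anti:
  assumes w: "wf_instance I" and s: "M \<subseteq> M'" and t: "M' \<subseteq> tentI I" and xk: "(x,k) \<in> M"
    and en: "endangered I M' x k"
  shows "endangered I M x k"
proof -
  have fin: "finite (Res I)" using w by (simp add: wf_instance_def)
  have ra: "relevant M' k y \<Longrightarrow> relevant M k y" for y using relevant_anti[OF w s t] .
  show ?thesis
  proof (cases "(x,k) \<in> pendI I")
    case True
    have "card {r'\<in>Res I. relevant M' k r'} \<le> card {r'\<in>Res I. relevant M k r'}"
      by (rule card_mono) (use fin ra in auto)
    then show ?thesis using en xk True by (simp add: endangered_def)
  next
    case False
    have "card {r'\<in>Res I. precedes (hlist I k) r' x \<and> relevant M' k r'}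
          \<le> card {r'\<in>Res I. precedes (hlist I k) r' x \<and> relevant M k r'}"
      by (rule card_mono) (use fin ra in auto)
    then show ?thesis using en xk False by (simp add: endangered_def)
  qed
qed

lemma safeI: "M \<subseteq> tentI I \<Longrightarrow> (\<And>x k. (x,k) \<in> M \<Longrightarrow> \<not> endangered I M x k) \<Longrightarrow> safe I M"
  by (auto simp: safe_def)

lemma safeD: "safe I M \<Longrightarrow> (x,k) \<in> M \<Longrightarrow> \<not> endangered I M x k"
  by (auto simp: safe_def)

lemma max_safe_eq:
  assumes w: "wf_instance I"
  shows "max_safe I = \<Union>{M. safe I M}"
proof -
  let ?U = "\<Union>{M. safe I M}"
  have sub: "?U \<subseteq> tentI I" by (auto simp: safe_def)
  have sU: "safe I ?U"
  proof (rule safeI[OF sub])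
    fix x k assume "(x,k) \<in> ?U"
    then obtain M where sM: "safe I M" and pM: "(x,k) \<in> M" by blast
    have MU: "M \<subseteq> ?U" using sM by blast
    have "\<not> endangered I M x k" using safeD[OF sM pM] .
    then show "\<not> endangered I ?U x k" using endangered_anti[OF w MU sub] pM by blast
  qed
  show ?thesis unfolding max_safe_def
  proof (rule the_equality)
    show "safe I ?U \<and> (\<forall>M'. safe I M' \<and> ?U \<subseteq> M' \<longrightarrow> M' = ?U)" using sU by blast
  next
    fix M assume a: "safe I M \<and> (\<forall>M'. safe I M' \<and> M \<subseteq> M' \<longrightarrow> M' = M)"
    then have "M \<subseteq> ?U" by blast
    then show "M = ?U" using a sU by blast
  qed
qed

lemma main_safe:
  assumes w: "wf_instance I" and rm: "resident_minimal I" and q: "\<forall>h'\<in>Hosp I. quota I h' = 1"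
    and fin: "finalizable I r h"
  shows "\<not> endangered I {(x,k). finalizable I x k} r h"
proof
  let ?F = "{(x,k). finalizable I x k}"
  let ?S = "max_seq I"
  assume en: "endangered I ?F r h"
  have tent: "(r,h) \<in> tentI I" using fin by (simp add: finalizable_def)
  have mS: "maximal_feasible I ?S" using max_seq_max[OF w] .
  have fS: "feasible I ?S" using max_facts[OF w] .
  have pr: "(r,h) \<in> props ?S" and nrj: "(r,h) \<notin> rejs ?S" using tent by (simp_all add: tentI_def tents_def)
  have rR: "r \<in> Res I" and hH: "h \<in> Hosp I" using feasible_props_RH[OF w fS pr] by simp_all
  have qh: "quota I h = 1" using q hH by simp
  have FT: "?F \<subseteq> tentI I" by (auto simp: finalizable_def)
  have TP: "tentI I \<subseteq> propI I" by (auto simp: tentI_def propI_def tents_def)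
  have notT: "\<not> ousted I (props ?S) r h" using ousted_not_tent[OF mS] tent by (auto simp: tentI_def)
  have dh: "distinct (hlist I h)" using w hH by (simp add: wf_instance_def)
  have finR: "finite (Res I)" using w by (simp add: wf_instance_def)
  have "\<exists>r'. r' \<in> Res I \<and> r' \<noteq> r \<and> relevant ?F h r' \<and> (precedes (hlist I h) r' r \<or> r \<notin> set (hlist I h))"
  proof (cases "(r,h) \<in> pendI I")
    case True
    then have nr: "r \<notin> set (hlist I h)" by (simp add: pendI_def pends_def)
    have c2: "card {r'\<in>Res I. relevant ?F h r'} \<ge> 2" using en True qh by (simp add: endangered_def)
    show ?thesis
    proof (rule ccontr)
      assume "\<not> ?thesis"
      then have "{r'\<in>Res I. relevant ?F h r'} \<subseteq> {r}" using nr by blast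
      then have "card {r'\<in>Res I. relevant ?F h r'} \<le> card {r}" by (rule card_mono[rotated]) simp
      then show False using c2 by simp
    qed
  next
    case False
    then have rl: "r \<in> set (hlist I h)" using tent by (simp add: pendI_def pends_def tentI_def)
    have c1: "card {r'\<in>Res I. precedes (hlist I h) r' r \<and> relevant ?F h r'} \<ge> 1"
      using en False qh by (simp add: endangered_def)
    then have "{r'\<in>Res I. precedes (hlist I h) r' r \<and> relevant ?F h r'} \<noteq> {}"
      by (intro notI) simp
    then obtain r' where r': "r' \<in> Res I" "precedes (hlist I h) r' r" "relevant ?F h r'" by blast
    have "r' \<noteq> r" using r'(2) precedes_irrefl[OF dh] by blast
    then show ?thesis using r' by blast
  qed
  then obtain r' where r'R: "r' \<in> Res I" and ne: "r' \<noteq> r" and rel: "relevant ?F h r'"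
    and cond: "precedes (hlist I h) r' r \<or> r \<notin> set (hlist I h)" by blast
  show False
  proof (cases "(r',h) \<in> propI I")
    case True
    show False
    proof (cases "r \<in> set (hlist I h)")
      case True
      then have p: "precedes (hlist I h) r' r" using cond by blast
      let ?M = "props ?S"
      have a1: "card (set (hlist I h) \<inter> res_h h ?M) \<ge> 1"
        using True pr by (intro card_ge1) (auto simp: res_h_def)
      have a2: "card {y\<in>res_h h ?M. precedes (hlist I h) y r} \<ge> 1"
      proof (rule card_ge1)
        show "finite {y\<in>res_h h ?M. precedes (hlist I h) y r}"
          by (rule finite_subset[of _ "set (hlist I h)"]) (auto dest: precedes_set)
        show "r' \<in> {y\<in>res_h h ?M. precedes (hlist I h) y r}"
          using \<open>(r',h) \<in> propI I\<close> p by (simp add: res_h_def propI_def)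
      qed
      have "ousted I ?M r h" using pr a1 a2 qh by (simp add: ousted_def)
      then show False using notT by blast
    next
      case False
      obtain J0 where c0: "completion I J0" using exists_completion[OF w] by blast
      obtain J1 where c1: "completion I J1" and p1: "precedes (hlist J1 h) r' r"
        using step1[OF c0 rR r'R ne[symmetric] hH cond] by blast
      have e1: "extension I J1" using c1 by (simp add: completion_def)
      have pJ: "(r',h) \<in> propI J1" using propI_mono[OF w e1] \<open>(r',h) \<in> propI I\<close> by blast
      have qJ: "quota J1 h = 1" using completion_facts(4)[OF c1] hH qh by simp
      have "(r,h) \<notin> tentI J1" using K_core[OF w e1 pJ p1 _ qJ] pr by (simp add: propI_def)
      then show False using fin c1 by (simp add: finalizable_def)
    qed
  next
    case False
    have nh: "h \<notin> set (rlist I r')" using False rm by (simp add: resident_minimal_def)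
    have "(r',h) \<notin> ?F" using False FT TP by blast
    then have nres: "r' \<notin> res_of ?F" using rel by (simp add: relevant_def)
    have nf: "\<forall>k. (r',k) \<in> tentI I \<longrightarrow> \<not> finalizable I r' k"
      using nres by (auto simp: res_of_def)
    have prh: "(r,h) \<in> propI I" using pr by (simp add: propI_def)
    obtain J where c: "completion I J" and nt: "(r,h) \<notin> tentI J"
      using build_J[OF w rm rR r'R ne[symmetric] hH qh prh nh nf cond] by blast
    then show False using fin by (simp add: finalizable_def)
  qed
qed

theorem theorem7:
  fixes I :: "('r, 'h) hr_instance" and r :: 'r and h :: 'h
  assumes "wf_instance I"
    and "resident_minimal I"
    and "\<forall>h'\<in>Hosp I. quota I h' = 1"
    and "(r, h) \<in> tentI I"
    and "finalizable I r h"
  shows "(r, h) \<in> max_safe I"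
proof -
  let ?F = "{(x,k). finalizable I x k}"
  have "safe I ?F"
  proof (rule safeI)
    show "?F \<subseteq> tentI I" by (auto simp: finalizable_def)
  next
    fix x k assume "(x,k) \<in> ?F"
    then have f: "finalizable I x k" by simp
    show "\<not> endangered I ?F x k" using main_safe[OF assms(1-3) f] .
  qed
  then have "?F \<subseteq> max_safe I" using max_safe_eq[OF assms(1)] by blast
  then show ?thesis using assms(5) by blast
qed


end
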